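(* If $G$ is a connected indecomposable graph on $[n]$ with $\operatorname{pv}(G)>0$, then $\operatorname{pv}(G)-\alpha(G)>0$.
   Context: A pendant vertex is a vertex of degree one; $\operatorname{pv}(G)$ is the number of pendant vertices of $G$. For $v\in V(G)$, $\operatorname{cdeg}_G(v)$ is the number of maximal cliques of $G$ containing $v$ and $\operatorname{pdeg}_G(v)$ is the number of pendant vertices adjacent to $v$. A vertex $v$ with $\operatorname{pdeg}_G(v)\ge1$ is of type 1 if $\operatorname{cdeg}_G(v)=\operatorname{pdeg}_G(v)+1$ (and of type 2 if $\operatorname{cdeg}_G(v)\ge\operatorname{pdeg}_G(v)+2$); $\alpha(G)$ is the number of type 1 vertices. A vertex is free if it belongs to exactly one maximal clique. $G$ is decomposable if $G=G_1\cup G_2$ with $V(G_1)\cap V(G_2)=\{v\}$, $v$ free in both $G_1$ and $G_2$; otherwise indecomposable. *)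

theory Defs
  imports Main
begin

definition sgraph :: "'a set \<Rightarrow> 'a set set \<Rightarrow> bool" where
  "sgraph V E \<longleftrightarrow> finite V \<and> (\<forall>e\<in>E. e \<subseteq> V \<and> card e = 2)"

definition adj_rel :: "'a set set \<Rightarrow> ('a \<times> 'a) set" where
  "adj_rel E = {(x, y). {x, y} \<in> E}"

definition gconnected :: "'a set \<Rightarrow> 'a set set \<Rightarrow> bool" where
  "gconnected V E \<longleftrightarrow> (\<forall>x\<in>V. \<forall>y\<in>V. (x, y) \<in> (adj_rel E)\<^sup>*)"

definition is_clique :: "'a set \<Rightarrow> 'a set set \<Rightarrow> 'a set \<Rightarrow> bool" where
  "is_clique V E C \<longleftrightarrow> C \<subseteq> V \<and> (\<forall>x\<in>C. \<forall>y\<in>C. x \<noteq> y \<longrightarrow> {x, y} \<in> E)"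

definition max_clique :: "'a set \<Rightarrow> 'a set set \<Rightarrow> 'a set \<Rightarrow> bool" where
  "max_clique V E C \<longleftrightarrow> is_clique V E C \<and> (\<forall>D. is_clique V E D \<and> C \<subseteq> D \<longrightarrow> D = C)"

definition cdeg :: "'a set \<Rightarrow> 'a set set \<Rightarrow> 'a \<Rightarrow> nat" where
  "cdeg V E v = card {C. max_clique V E C \<and> v \<in> C}"

definition gdeg :: "'a set \<Rightarrow> 'a set set \<Rightarrow> 'a \<Rightarrow> nat" where
  "gdeg V E v = card {u\<in>V. {u, v} \<in> E}"

definition pendant :: "'a set \<Rightarrow> 'a set set \<Rightarrow> 'a \<Rightarrow> bool" where
  "pendant V E v \<longleftrightarrow> v \<in> V \<and> gdeg V E v = 1"

definition pv :: "'a set \<Rightarrow> 'a set set \<Rightarrow> nat" where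
  "pv V E = card {v\<in>V. pendant V E v}"

definition pdeg :: "'a set \<Rightarrow> 'a set set \<Rightarrow> 'a \<Rightarrow> nat" where
  "pdeg V E v = card {u\<in>V. {u, v} \<in> E \<and> pendant V E u}"

definition type1 :: "'a set \<Rightarrow> 'a set set \<Rightarrow> 'a \<Rightarrow> bool" where
  "type1 V E v \<longleftrightarrow> pdeg V E v \<ge> 1 \<and> cdeg V E v = pdeg V E v + 1"

definition alpha :: "'a set \<Rightarrow> 'a set set \<Rightarrow> nat" where
  "alpha V E = card {v\<in>V. type1 V E v}"

definition free_vertex :: "'a set \<Rightarrow> 'a set set \<Rightarrow> 'a \<Rightarrow> bool" where
  "free_vertex V E v \<longleftrightarrow> v \<in> V \<and> cdeg V E v = 1"

(* G = G1 \<union> G2 with V(G1) \<inter> V(G2) = {v}, v free in both; both parts are proper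
   (have a vertex other than v), otherwise every graph with a free vertex would be
   trivially decomposable. *)
definition decomposable :: "'a set \<Rightarrow> 'a set set \<Rightarrow> bool" where
  "decomposable V E \<longleftrightarrow> (\<exists>V1 E1 V2 E2 v.
      sgraph V1 E1 \<and> sgraph V2 E2 \<and> V = V1 \<union> V2 \<and> E = E1 \<union> E2 \<and>
      V1 \<inter> V2 = {v} \<and> V1 \<noteq> {v} \<and> V2 \<noteq> {v} \<and>
      free_vertex V1 E1 v \<and> free_vertex V2 E2 v)"

end

theory Submission
  imports Defs
begin

lemma pendant_nb:
  assumes "pendant V E p"
  obtains w where "w \<in> V" "{w,p} \<in> E" "\<And>x. x \<in> V \<Longrightarrow> {x,p} \<in> E \<Longrightarrow> x = w"
proof -
  from assms have "card {u\<in>V. {u,p}\<in>E} = 1" by (simp add: pendant_def gdeg_def)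
  then obtain w where "{u\<in>V. {u,p}\<in>E} = {w}" by (auto simp: card_1_singleton_iff)
  then show ?thesis using that by blast
qed

lemma decomp:
  assumes sg: "sgraph V E" and pp: "pendant V E p" and vp: "{v,p} \<in> E"
    and cd: "cdeg V E v = 2"
  shows "decomposable V E"
proof -
  have ed: "\<And>e. e \<in> E \<Longrightarrow> e \<subseteq> V \<and> card e = 2" using sg by (auto simp: sgraph_def)
  have finV: "finite V" using sg by (simp add: sgraph_def)
  obtain w where w: "w \<in> V" "{w,p} \<in> E" "\<And>x. x \<in> V \<Longrightarrow> {x,p} \<in> E \<Longrightarrow> x = w"
    using pendant_nb[OF pp] by blast
  have vV: "v \<in> V" and pV: "p \<in> V" using ed[OF vp] by auto
  have vnp: "v \<noteq> p" using ed[OF vp] by (auto simp: card_2_iff)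
  have adjp: "\<And>x. {x,p} \<in> E \<Longrightarrow> x = v"
  proof -
    fix x assume "{x,p} \<in> E"
    then have "x \<in> V" using ed by auto
    then show "x = v" using w(3) \<open>{x,p} \<in> E\<close> w(3)[OF vV vp] by auto
  qed
  have cvp: "is_clique V E {v,p}" using vV pV vp by (auto simp: is_clique_def insert_commute)
  have sub: "\<And>D. is_clique V E D \<Longrightarrow> p \<in> D \<Longrightarrow> D \<subseteq> {v,p}"
  proof
    fix D x assume D: "is_clique V E D" "p \<in> D" and x: "x \<in> D"
    show "x \<in> {v,p}"
    proof (cases "x = p")
      case False
      then have "{x,p} \<in> E" using D x by (auto simp: is_clique_def)
      then show ?thesis using adjp by auto
    qed simp
  qed
  have mvp: "max_clique V E {v,p}"
    unfolding max_clique_def using cvp sub by blast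
  define S where "S = {C. max_clique V E C \<and> v \<in> C}"
  have "card S = 2" using cd by (simp add: cdeg_def S_def)
  then obtain a b where ab: "S = {a,b}" "a \<noteq> b" by (auto simp: card_2_iff)
  have "{v,p} \<in> S" using mvp by (simp add: S_def)
  then obtain C where C: "C \<in> S" "C \<noteq> {v,p}" and SC: "S = {C, {v,p}}"
    using ab by auto
  have mC: "max_clique V E C" and vC: "v \<in> C" using C by (auto simp: S_def)
  have pC: "p \<notin> C"
  proof
    assume "p \<in> C"
    then have "C \<subseteq> {v,p}" using sub mC by (auto simp: max_clique_def)
    then show False using mC cvp C(2) by (auto simp: max_clique_def)
  qed
  obtain u where u: "u \<in> C" "u \<noteq> v"
  proof -
    have "C \<noteq> {v}"
    proof
      assume "C = {v}"
      then have "C \<subseteq> {v,p}" by auto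
      then show False using mC cvp C(2) by (auto simp: max_clique_def)
    qed
    then show ?thesis using that vC by blast
  qed
  have CV: "C \<subseteq> V" using mC by (auto simp: max_clique_def is_clique_def)
  define V2 where "V2 = V - {p}"
  define E2 where "E2 = E - {{v,p}}"
  have sg1: "sgraph {v,p} {{v,p}}" using vnp by (simp add: sgraph_def)
  have sg2: "sgraph V2 E2"
    unfolding sgraph_def
  proof (rule conjI)
    show "finite V2" using finV by (simp add: V2_def)
  next
    show "\<forall>e\<in>E2. e \<subseteq> V2 \<and> card e = 2"
  proof
    fix e assume e: "e \<in> E2"
    then have eE: "e \<in> E" and ne: "e \<noteq> {v,p}" by (auto simp: E2_def)
    have "p \<notin> e"
    proof
      assume pe: "p \<in> e"
      obtain x y where xy: "e = {x,y}" "x \<noteq> y" using ed[OF eE] by (auto simp: card_2_iff)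
      show False
      proof (cases "x = p")
        case True
        then have "{y,p} \<in> E" using eE xy by (simp add: insert_commute)
        then have "y = v" using adjp by blast
        then show False using ne xy True by (auto simp: insert_commute)
      next
        case False
        then have "y = p" using pe xy by auto
        then have "x = v" using adjp eE xy by blast
        then show False using ne xy \<open>y = p\<close> by auto
      qed
    qed
    moreover have "e \<subseteq> V" "card e = 2" using ed[OF eE] by auto
    ultimately show "e \<subseteq> V2 \<and> card e = 2" unfolding V2_def by blast
  qed
  qed
  have f1: "free_vertex {v,p} {{v,p}} v"
  proof -
    have cl: "is_clique {v,p} {{v,p}} {v,p}" by (auto simp: is_clique_def insert_commute)
    have "{D. max_clique {v,p} {{v,p}} D \<and> v \<in> D} = {{v,p}}"
    proof (rule set_eqI, rule iffI)
      fix D assume "D \<in> {D. max_clique {v,p} {{v,p}} D \<and> v \<in> D}"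
      then have "max_clique {v,p} {{v,p}} D" by simp
      then have "D \<subseteq> {v,p}" "is_clique {v,p} {{v,p}} {v,p} \<and> D \<subseteq> {v,p} \<longrightarrow> {v,p} = D"
        by (auto simp: max_clique_def is_clique_def)
      then show "D \<in> {{v,p}}" using cl by auto
    next
      fix D assume "D \<in> {{v,p}}"
      then show "D \<in> {D. max_clique {v,p} {{v,p}} D \<and> v \<in> D}"
        using cl by (auto simp: max_clique_def is_clique_def)
    qed
    then show ?thesis by (simp add: free_vertex_def cdeg_def)
  qed
  have cliq2: "\<And>D. is_clique V2 E2 D \<Longrightarrow> is_clique V E D"
    by (auto simp: is_clique_def V2_def E2_def)
  have cliq2': "\<And>D. is_clique V E D \<Longrightarrow> p \<notin> D \<Longrightarrow> is_clique V2 E2 D"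
  proof -
    fix D assume D: "is_clique V E D" "p \<notin> D"
    show "is_clique V2 E2 D" unfolding is_clique_def
    proof (intro conjI ballI impI)
      show "D \<subseteq> V2" using D by (auto simp: is_clique_def V2_def)
    next
      fix x y assume xy: "x \<in> D" "y \<in> D" "x \<noteq> y"
      then have "{x,y} \<in> E" using D(1) by (simp add: is_clique_def)
      moreover have "{x,y} \<noteq> {v,p}" using xy D(2) by (auto simp: doubleton_eq_iff)
      ultimately show "{x,y} \<in> E2" by (simp add: E2_def)
    qed
  qed
  have mC2: "max_clique V2 E2 C"
    using mC pC cliq2 cliq2' by (auto simp: max_clique_def)
  have f2: "free_vertex V2 E2 v"
  proof -
    have "{D. max_clique V2 E2 D \<and> v \<in> D} = {C}"
    proof (rule set_eqI, rule iffI)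
      fix D assume "D \<in> {D. max_clique V2 E2 D \<and> v \<in> D}"
      then have mD: "max_clique V2 E2 D" and vD: "v \<in> D" by auto
      have pD: "p \<notin> D" using mD by (auto simp: max_clique_def is_clique_def V2_def)
      have "max_clique V E D"
        unfolding max_clique_def
      proof (intro conjI allI impI)
        show "is_clique V E D" using mD cliq2 by (auto simp: max_clique_def)
      next
        fix D' assume D': "is_clique V E D' \<and> D \<subseteq> D'"
        show "D' = D"
        proof (cases "p \<in> D'")
          case True
          then have "D' \<subseteq> {v,p}" using sub D' by blast
          then have "D = {v}" using D' pD vD by auto
          then have "C = {v}" using mD mC2 vC by (auto simp: max_clique_def)
          then show ?thesis using u by auto
        next
          case False
          then show ?thesis using cliq2' D' mD by (auto simp: max_clique_def)
        qed
      qed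
      then have "D \<in> S" using vD by (simp add: S_def)
      then show "D \<in> {C}" using SC pD by auto
    next
      fix D assume "D \<in> {C}"
      then show "D \<in> {D. max_clique V2 E2 D \<and> v \<in> D}" using mC2 vC by auto
    qed
    moreover have "v \<in> V2" using vV vnp by (simp add: V2_def)
    ultimately show ?thesis by (simp add: free_vertex_def cdeg_def)
  qed
  have "V = {v,p} \<union> V2" using vV pV by (auto simp: V2_def)
  moreover have "E = {{v,p}} \<union> E2" using vp by (auto simp: E2_def)
  moreover have "{v,p} \<inter> V2 = {v}" using vV vnp by (auto simp: V2_def)
  moreover have "{v,p} \<noteq> {v}" using vnp by auto
  moreover have "V2 \<noteq> {v}" using u CV pC by (auto simp: V2_def)
  ultimately show ?thesis unfolding decomposable_def using sg1 sg2 f1 f2 by blast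
qed

theorem lemma4p3:
  fixes n :: nat and E :: "nat set set"
  assumes "sgraph {1..n} E"
    and "gconnected {1..n} E"
    and "\<not> decomposable {1..n} E"
    and "pv {1..n} E > 0"
  shows "int (pv {1..n} E) - int (alpha {1..n} E) > 0"
proof (rule ccontr)
  define V where "V = {1..n}"
  define P where "P = {x\<in>V. pendant V E x}"
  define T where "T = {x\<in>V. type1 V E x}"
  define f where "f x = (THE w. w \<in> V \<and> {w,x} \<in> E)" for x
  have sg: "sgraph V E" using assms(1) by (simp add: V_def)
  have fP: "f x \<in> V \<and> {f x, x} \<in> E \<and> (\<forall>y\<in>V. {y,x} \<in> E \<longrightarrow> y = f x)"
    if px: "pendant V E x" for x
  proof -
    obtain w where w: "w \<in> V" "{w,x} \<in> E" "\<And>y. y \<in> V \<Longrightarrow> {y,x} \<in> E \<Longrightarrow> y = w"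
      using pendant_nb[OF px] by blast
    have "f x = w" unfolding f_def
    proof (rule the_equality)
      show "w \<in> V \<and> {w,x} \<in> E" using w(1,2) by blast
    next
      fix y assume "y \<in> V \<and> {y,x} \<in> E" then show "y = w" using w(3) by blast
    qed
    then show ?thesis using w by metis
  qed
  assume "\<not> int (pv {1..n} E) - int (alpha {1..n} E) > 0"
  then have le: "card P \<le> card T" by (simp add: P_def T_def pv_def alpha_def V_def)
  have finV: "finite V" by (simp add: V_def)
  have finP: "finite P" and finT: "finite T" using finV by (auto simp: P_def T_def)
  have TP: "T \<subseteq> f ` P"
  proof
    fix t assume "t \<in> T"
    then have tV: "t \<in> V" and "pdeg V E t \<ge> 1" by (auto simp: T_def type1_def)
    then have "pdeg V E t \<noteq> 0" by linarith
    then have "{u\<in>V. {u, t} \<in> E \<and> pendant V E u} \<noteq> {}" unfolding pdeg_def by (metis card.empty)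
    then obtain u where uu: "u \<in> V" "{u,t} \<in> E" "pendant V E u" by auto
    have "{t,u} \<in> E" using uu(2) by (simp add: insert_commute)
    then have "f u = t" using fP[OF uu(3)] tV by blast
    moreover have "u \<in> P" using uu by (simp add: P_def)
    ultimately show "t \<in> f ` P" by blast
  qed
  have "card (f ` P) \<le> card P" using card_image_le finP by blast
  moreover have "card T \<le> card (f ` P)" using TP finP by (simp add: card_mono)
  ultimately have c1: "card (f ` P) = card P" and c2: "card T = card (f ` P)"
    using le by linarith+
  have inj: "inj_on f P" using eq_card_imp_inj_on[OF finP c1] .
  have TeP: "T = f ` P" using card_subset_eq[OF finite_imageI[OF finP] TP c2] .
  have "pv V E > 0" using assms(4) by (simp add: V_def)
  then have "P \<noteq> {}" unfolding pv_def P_def by (metis card.empty less_irrefl)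
  then obtain p where pP: "p \<in> P" by auto
  define v where "v = f p"
  have vT: "v \<in> T" using TeP pP v_def by blast
  have pp: "pendant V E p" using pP by (simp add: P_def)
  have vp: "{v,p} \<in> E" using fP[OF pp] v_def by blast
  have vV: "v \<in> V" using vT by (simp add: T_def)
  have "{u\<in>V. {u, v} \<in> E \<and> pendant V E u} = {p}"
  proof (rule set_eqI, rule iffI)
    fix u assume "u \<in> {u\<in>V. {u, v} \<in> E \<and> pendant V E u}"
    then have uu: "u \<in> V" "{u,v} \<in> E" "pendant V E u" by auto
    have "{v,u} \<in> E" using uu(2) by (simp add: insert_commute)
    then have "f u = v" using fP[OF uu(3)] vV by blast
    moreover have "u \<in> P" using uu by (simp add: P_def)
    ultimately show "u \<in> {p}" using inj pP v_def by (simp add: inj_on_def)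
  next
    fix u assume "u \<in> {p}"
    then show "u \<in> {u\<in>V. {u, v} \<in> E \<and> pendant V E u}"
      using pP vp by (auto simp: P_def insert_commute)
  qed
  then have "pdeg V E v = 1" by (simp add: pdeg_def)
  then have "cdeg V E v = 2" using vT by (simp add: T_def type1_def)
  then have "decomposable V E" using decomp[OF sg pp vp] by blast
  then show False using assms(3) by (simp add: V_def)
qed

end
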